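(* Consider the binary sequential learning model described in the context with signal accuracy $p\in(1/2,1)$. Let $\alpha=(1-p)/p$ and, for each integer $k\ge 2$, let $$v_k=\frac{1-\alpha^{\frac{k-2}{k-1}}}{1-\alpha^{\frac{k-2}{k-1}}+\alpha^{\frac{-1}{k-1}}-\alpha},\qquad \varepsilon_k=\log\frac{1-v_k}{v_k}.$$ Suppose that, subject to privacy budget $\varepsilon$, agents employ the randomized response strategy with flip probability $u(\varepsilon)=\frac{1}{1+e^{\varepsilon}}$ before a cascade. Then for $\varepsilon\in(\varepsilon_{k+1},\varepsilon_k]$ the information cascade threshold $k(\varepsilon)$ does not change (it equals $k$), and on this interval the probability of a correct cascade is increasing in $\varepsilon$.
   Context: Binary model: unknown state $\theta\in\{-1,+1\}$ with uniform prior; agents $n=1,2,\dots$ act in sequence; agent $n$ privately observes $s_n\in\{-1,+1\}$, i.i.d. given $\theta$ with $\mathbb{P}(s_n=\theta\mid\theta)=p$. Before a cascade, agent $n$'s intended action equals her signal, $a_n=s_n$, and she publicly reports $x_n=a_n$ with probability $1-u(\varepsilon)$ and $x_n=-a_n$ with probability $u(\varepsilon)$. Let $\rho(\varepsilon)=\frac{(1-u(\varepsilon))(1-p)+u(\varepsilon)p}{u(\varepsilon)(1-p)+p(1-u(\varepsilon))}$. The information cascade threshold is the integer $k(\varepsilon)=\lfloor\log_{\rho(\varepsilon)}\frac{1-p}{p}\rfloor+1$: it is the value of the difference between the number of $+1$ and $-1$ reports in the public history at which agents become indifferent to their private signals. An information cascade starts at the first agent whose observed history has (number of $+1$ reports)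 $-$ (number of $-1$ reports) equal to $+k(\varepsilon)$ or $-k(\varepsilon)$; from then on every agent takes and truthfully reports the action favored by the history ($+1$ or $-1$ respectively). The cascade is correct if this action equals $\theta$; the probability of a correct cascade is the probability of this event. *)

theory Defs
  imports Complex_Main
begin

definition rr_flip :: "real \<Rightarrow> real" where
  "rr_flip eps = 1 / (1 + exp eps)"

definition rho :: "real \<Rightarrow> real \<Rightarrow> real" where
  "rho p u = ((1 - u) * (1 - p) + u * p) / (u * (1 - p) + p * (1 - u))"

definition cascade_threshold :: "real \<Rightarrow> real \<Rightarrow> int" where
  "cascade_threshold p u = \<lfloor>log (rho p u) ((1 - p) / p)\<rfloor> + 1"

text \<open>Probability that a pre-cascade public report equals +1 given the state theta:
  the signal equals theta w.p. p, and the report flips the signal w.p. u.\<close>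
definition up_prob :: "real \<Rightarrow> real \<Rightarrow> int \<Rightarrow> real" where
  "up_prob p u theta =
     (if theta = 1 then p else 1 - p) * (1 - u) + (if theta = 1 then 1 - p else p) * u"

text \<open>absorb a k n d b: probability that the difference process (reports +1 minus
  reports -1), moving up w.p. a and down w.p. 1-a independently at each step and
  started at d, reaches the value b*k (b = +1 or -1) within n steps, where the
  process is stopped as soon as it reaches +k or -k (the start of a cascade).\<close>
fun absorb :: "real \<Rightarrow> int \<Rightarrow> nat \<Rightarrow> int \<Rightarrow> int \<Rightarrow> real" where
  "absorb a k 0 d b = (if d \<ge> k then (if b = 1 then 1 else 0)
                       else if d \<le> -k then (if b = -1 then 1 else 0) else 0)"
| "absorb a k (Suc n) d b = (if d \<ge> k then (if b = 1 then 1 else 0)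
                       else if d \<le> -k then (if b = -1 then 1 else 0)
                       else a * absorb a k n (d + 1) b + (1 - a) * absorb a k n (d - 1) b)"

definition correct_cascade_prob_k :: "real \<Rightarrow> real \<Rightarrow> int \<Rightarrow> real" where
  "correct_cascade_prob_k p u k =
     (\<Sum>theta\<in>{-1, 1::int}. (1/2) * lim (\<lambda>n. absorb (up_prob p u theta) k n 0 theta))"

definition correct_cascade_prob :: "real \<Rightarrow> real \<Rightarrow> real" where
  "correct_cascade_prob p eps =
     correct_cascade_prob_k p (rr_flip eps) (cascade_threshold p (rr_flip eps))"

definition v_k :: "real \<Rightarrow> nat \<Rightarrow> real" where
  "v_k p k = (let \<alpha> = (1 - p) / p in
     (1 - \<alpha> powr ((real k - 2) / (real k - 1))) /
     (1 - \<alpha> powr ((real k - 2) / (real k - 1)) + \<alpha> powr (-1 / (real k - 1)) - \<alpha>))"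

definition eps_k :: "real \<Rightarrow> nat \<Rightarrow> real" where
  "eps_k p k = ln ((1 - v_k p k) / v_k p k)"

text \<open>The interval (eps_{k+1}, eps_k]; for k = 2, v_2 = 0 and eps_2 = +infinity,
  so the interval is (eps_3, infinity).\<close>
definition eps_interval :: "real \<Rightarrow> nat \<Rightarrow> real set" where
  "eps_interval p k = {eps. eps_k p (k + 1) < eps \<and> (k = 2 \<or> eps \<le> eps_k p k)}"

end

theory Submission
  imports Defs
begin


lemma absorb_bounds:
  assumes "0 \<le> a" "a \<le> 1"
  shows "0 \<le> absorb a k n d b \<and> absorb a k n d b \<le> 1"
  using assms
proof (induction n arbitrary: d)
  case 0 then show ?case by simp
next
  case (Suc n)
  have A: "0 \<le> absorb a k n (d+1) b" "absorb a k n (d+1) b \<le> 1"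
    "0 \<le> absorb a k n (d-1) b" "absorb a k n (d-1) b \<le> 1" using Suc by auto
  have "a * absorb a k n (d + 1) b \<le> a" using A assms by (simp add: mult_left_le)
  moreover have "(1-a) * absorb a k n (d - 1) b \<le> 1 - a" using A assms by (simp add: mult_left_le)
  ultimately show ?case using A assms by auto
qed

lemma absorb_mono:
  assumes "0 \<le> a" "a \<le> 1"
  shows "absorb a k n d b \<le> absorb a k (Suc n) d b"
  using assms
proof (induction n arbitrary: d)
  case 0 then show ?case using absorb_bounds[OF assms] by auto
next
  case (Suc n)
  have m1: "a * absorb a k n (d + 1) b \<le> a * absorb a k (Suc n) (d + 1) b"
    by (rule mult_left_mono[OF Suc.IH[OF assms]]) (use assms in simp)
  have m2: "(1-a) * absorb a k n (d - 1) b \<le> (1-a) * absorb a k (Suc n) (d - 1) b"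
    by (rule mult_left_mono[OF Suc.IH[OF assms]]) (use assms in simp)
  show ?case
  proof (cases "k \<le> d \<or> d \<le> -k")
    case True
    then have "absorb a k (Suc n) d b = absorb a k (Suc (Suc n)) d b"
      by (simp only: absorb.simps) (auto simp del: absorb.simps)
    then show ?thesis by simp
  next
    case False
    then have "absorb a k (Suc n) d b = a * absorb a k n (d + 1) b + (1 - a) * absorb a k n (d - 1) b"
      "absorb a k (Suc (Suc n)) d b = a * absorb a k (Suc n) (d + 1) b + (1 - a) * absorb a k (Suc n) (d - 1) b"
      by (simp_all only: absorb.simps) (auto simp del: absorb.simps)
    with m1 m2 show ?thesis by linarith
  qed
qed

lemma absorb_conv:
  assumes "0 \<le> a" "a \<le> 1"
  shows "(\<lambda>n. absorb a k n d b) \<longlonglongrightarrow> lim (\<lambda>n. absorb a k n d b)"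
proof -
  have "(\<lambda>n. absorb a k n d b) \<longlonglongrightarrow> Sup (range (\<lambda>n. absorb a k n d b))"
    apply (rule LIMSEQ_incseq_SUP)
    using absorb_bounds[OF assms] apply (auto simp: bdd_above_def intro!: exI[of _ 1])[1]
    using absorb_mono[OF assms] by (simp add: incseq_SucI)
  then show ?thesis by (simp add: limI)
qed

lemma absorb_refl:
  assumes "k > 0" shows "absorb (1-a) k n d (-1) = absorb a k n (-d) 1"
proof (induction n arbitrary: d)
  case 0 then show ?case using assms by auto
next
  case (Suc n)
  have e1: "-(d+1) = -d - 1" "-(d-1) = -d+1" by auto
  show ?case using Suc[of "d+1"] Suc[of "d-1"] unfolding absorb.simps e1 using assms by auto
qed

lemma harm_zero:
  fixes D :: "int \<Rightarrow> real" and a :: real and k :: int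
  assumes a: "0<a" "a<1" and k: "k \<ge> 1"
  and h: "\<And>d. -k < d \<Longrightarrow> d < k \<Longrightarrow> D d = a * D (d+1) + (1-a) * D (d-1)"
  and b1: "D (-k) = 0" and b2: "D k = 0"
  and d: "-k \<le> d" "d \<le> k"
  shows "D d = 0"
proof -
  define r where "r = (1-a)/a"
  define S where "S j = (\<Sum>i<j. r^i)" for j::nat
  define c where "c = D (-k+1)"
  have rpos: "r > 0" using a by (simp add: r_def)
  have step: "a * S (j+2) = S (j+1) - (1-a) * S j" for j
  proof -
    have "S (j+2) = S j + r^j + r^(j+1)" "S (j+1) = S j + r^j" by (simp_all add: S_def)
    moreover have "a * r^(j+1) = (1-a) * r^j" using a by (simp add: r_def field_simps)
    ultimately show ?thesis by (simp add: algebra_simps)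
  qed
  have main: "int j + 1 \<le> 2*k \<Longrightarrow> D (-k + int j) = c * S j \<and> D (-k + int j + 1) = c * S (j+1)" for j
  proof (induction j)
    case 0 then show ?case by (simp add: S_def c_def b1)
  next
    case (Suc j)
    then have IH: "D (-k + int j) = c * S j" "D (-k + int j + 1) = c * S (j+1)" by auto
    have hh: "D (-k + int j + 1) = a * D(-k + int j + 2) + (1-a) * D(-k + int j)"
      using h[of "-k + int j + 1"] Suc.prems by (simp add: algebra_simps)
    have "a * D(-k + int j + 2) = D (-k + int j + 1) - (1-a) * D(-k + int j)" using hh by linarith
    also have "\<dots> = c * (S (j+1) - (1-a) * S j)" using IH by (simp add: algebra_simps)
    also have "\<dots> = a * (c * S (j+2))" using step[of j] by simp
    finally have eq: "a * D(-k + int j + 2) = a * (c * S (j+2))" .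
    have an: "a \<noteq> 0" using a by simp
    have D2: "D(-k + int j + 2) = c * S (Suc j + 1)" using eq an by simp
    have e: "-k + int (Suc j) = -k + int j + 1" "-k + int (Suc j) + 1 = -k + int j + 2" by simp_all
    show ?case unfolding e using D2 IH(2) by (simp add: add.commute)
  qed
  define m where "m = nat (2*k - 1)"
  have m: "int m + 1 = 2*k" using k by (simp add: m_def)
  have "D k = c * S (m+1)" using main[of m] m by (simp add: algebra_simps)
  moreover have "S (m+1) > 0"
  proof -
    have "S (m+1) = S m + r^m" by (simp add: S_def)
    moreover have "S m \<ge> 0" unfolding S_def using rpos by (simp add: sum_nonneg)
    ultimately show ?thesis using rpos by (smt (verit) zero_less_power)
  qed
  ultimately have c0: "c = 0" using b2 by simp
  show ?thesis
  proof (cases "d = k")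
    case True then show ?thesis using b2 by simp
  next
    case False
    define j where "j = nat (d + k)"
    have "int j + 1 \<le> 2*k" "d = -k + int j" using d False by (auto simp: j_def)
    then show ?thesis using main[of j] c0 by simp
  qed
qed



lemma powi_harm:
  fixes r a :: real and m :: int
  assumes "r = (1-a)/a" "0 < a" "a < 1"
  shows "a * r powi (m+1) + (1-a) * r powi (m-1) = r powi m"
proof -
  have rpos: "r > 0" using assms by simp
  have e1: "r powi (m+1) = r powi m * r" using rpos by (simp add: power_int_add)
  have e2: "r powi (m-1) = r powi m / r" using rpos
    by (simp add: power_int_diff)
  have x1: "a * r = 1 - a" using assms by simp
  have x2: "(1-a) / r = a" using assms by simp
  have "a * (r powi m * r) + (1-a) * (r powi m / r) = r powi m * (a * r) + r powi m * ((1-a)/r)"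
    by (simp add: algebra_simps)
  also have "\<dots> = r powi m * ((1-a) + a)" unfolding x1 x2 by (simp add: algebra_simps)
  finally have "a * (r powi m * r) + (1-a) * (r powi m / r) = r powi m * ((1-a) + a)" .
  then show ?thesis using e1 e2 by simp
qed

lemma absorb_lim:
  fixes a :: real and K :: nat
  assumes a: "0 < a" "a < 1" "a \<noteq> 1/2" and K: "K \<ge> 1"
  shows "lim (\<lambda>n. absorb a (int K) n 0 1) = 1 / (1 + ((1-a)/a)^K)"
proof -
  define k where "k = int K"
  have k: "k \<ge> 1" using K by (simp add: k_def)
  define L where "L d = lim (\<lambda>n. absorb a k n d 1)" for d
  have conv: "(\<lambda>n. absorb a k n d 1) \<longlonglongrightarrow> L d" for d
    unfolding L_def by (rule absorb_conv) (use a in auto)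
  have harm: "L d = a * L (d+1) + (1-a) * L (d-1)" if "-k < d" "d < k" for d
  proof -
    have "(\<lambda>n. absorb a k (Suc n) d 1) \<longlonglongrightarrow> L d" using conv LIMSEQ_Suc by blast
    moreover have "(\<lambda>n. absorb a k (Suc n) d 1) = (\<lambda>n. a * absorb a k n (d+1) 1 + (1-a) * absorb a k n (d-1) 1)"
      using that by auto
    moreover have "(\<lambda>n. a * absorb a k n (d+1) 1 + (1-a) * absorb a k n (d-1) 1) \<longlonglongrightarrow> a * L (d+1) + (1-a) * L (d-1)"
      by (intro tendsto_intros conv)
    ultimately show ?thesis using LIMSEQ_unique by metis
  qed
  have Lk: "L k = 1"
  proof -
    have "(\<lambda>n. absorb a k n k 1) = (\<lambda>n. 1)" by (rule ext, case_tac n) auto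
    then show ?thesis unfolding L_def by simp
  qed
  have Lmk: "L (-k) = 0"
  proof -
    have "(\<lambda>n. absorb a k n (-k) 1) = (\<lambda>n. 0)" using k by (intro ext, case_tac n) auto
    then show ?thesis unfolding L_def by simp
  qed
  define r where "r = (1-a)/a"
  have rpos: "r > 0" using a by (simp add: r_def)
  have r1: "r \<noteq> 1" using a by (auto simp: r_def field_simps)
  have rK: "r^K \<noteq> 1" using r1 rpos K power_eq_iff_eq_base[of K r 1] by simp
  define F where "F d = (r powi (d+k) - 1) / (r^(2*K) - 1)" for d
  have den: "r^(2*K) - 1 \<noteq> 0"
  proof
    assume "r^(2*K) - 1 = 0"
    then have "(r^K)^2 = 1" by (simp add: power_mult mult.commute)
    then have "r^K = 1" using rpos by (simp add: power2_eq_1_iff) (smt (verit) zero_less_power rpos)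
    then show False using rK by simp
  qed
  have Fharm: "F d = a * F (d+1) + (1-a) * F (d-1)" for d
  proof -
    have h: "a * r powi (d+k+1) + (1-a) * r powi (d+k-1) = r powi (d+k)"
      using powi_harm[OF r_def a(1,2)] by simp
    have gen: "a*((x-1)/E) + (1-a)*((y-1)/E) = (a*x + (1-a)*y - 1)/E" if "E \<noteq> 0" for x y E :: real
      using that by (simp add: field_simps)
    have i: "d+1+k = d+k+1" "d-1+k = d+k-1" by simp_all
    have "a * F (d+1) + (1-a) * F (d-1)
        = (a * r powi (d+k+1) + (1-a) * r powi (d+k-1) - 1) / (r^(2*K) - 1)"
      unfolding F_def i by (rule gen[OF den])
    then show ?thesis using h by (simp add: F_def)
  qed
  have Fk: "F k = 1"
  proof -
    have kk: "k+k = int (2*K)" by (simp add: k_def)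
    have "r powi (k+k) = r^(2*K)" unfolding kk by (rule power_int_of_nat)
    then show ?thesis using den by (simp add: F_def)
  qed
  have Fmk: "F (-k) = 0" by (simp add: F_def)
  define D where "D d = L d - F d" for d
  have "D 0 = 0"
  proof (rule harm_zero[of a k D])
    show "D d = a * D (d + 1) + (1 - a) * D (d - 1)" if "-k < d" "d < k" for d
      using harm[OF that] Fharm[of d] by (simp add: D_def algebra_simps)
  qed (use a k Lk Lmk Fk Fmk in \<open>auto simp: D_def\<close>)
  then have "L 0 = F 0" by (simp add: D_def)
  also have "F 0 = (r^K - 1) / ((r^K)^2 - 1)"
    by (simp only: F_def k_def add_0 power_int_of_nat power_mult mult.commute)
  also have "\<dots> = 1 / (1 + r^K)"
  proof -
    have gen: "(x - 1) / (x^2 - 1) = 1 / (1 + x)" if "x \<noteq> 1" "x > 0" for x :: real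
    proof -
      have "x^2 - 1 = (x - 1) * (1 + x)" by (simp add: power2_eq_square algebra_simps)
      then show ?thesis using that by simp
    qed
    show ?thesis by (rule gen[OF rK]) (use rpos in simp)
  qed
  finally show ?thesis by (simp add: L_def k_def r_def)
qed



lemma cp_formula_aux:
  fixes p u q :: real
  assumes p: "1/2 < p" "p < 1" and u: "0 < u" "u < 1/2"
  defines "q \<equiv> p * (1-u) + (1-p) * u"
  shows "up_prob p u 1 = q" "up_prob p u (-1) = 1 - q" "rho p u = (1-q)/q"
    "1/2 < q" "q < 1"
proof -
  show "up_prob p u 1 = q" by (simp add: up_prob_def q_def)
  show "up_prob p u (-1) = 1 - q" by (simp add: up_prob_def q_def algebra_simps)
  show "rho p u = (1-q)/q" by (simp add: rho_def q_def algebra_simps)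
  have "q - 1/2 = (p - 1/2) * (1 - 2*u)" by (simp add: q_def algebra_simps)
  moreover have "(p - 1/2) * (1 - 2*u) > 0" using p u by simp
  ultimately show "1/2 < q" by simp
  have "1 - q = (1-p) * (1-u) + p * u" by (simp add: q_def algebra_simps)
  moreover have "(1-p) * (1-u) > 0" using p u by simp
  moreover have "p * u \<ge> 0" using p u by simp
  ultimately show "q < 1" by simp
qed

lemma rho_ge_iff:
  fixes p u r :: real
  assumes p: "1/2 < p" "p < 1" and u: "0 \<le> u" "u \<le> 1" and r: "r > 0"
  shows "r \<le> rho p u \<longleftrightarrow> (r - (1-p)/p) / ((1+r) * (1 - (1-p)/p)) \<le> u"
proof -
  define \<alpha> where "\<alpha> = (1-p)/p"
  have a: "0 < \<alpha>" "\<alpha> < 1" using p by (auto simp: \<alpha>_def field_simps)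
  have den: "u * (1 - p) + p * (1 - u) > 0"
  proof -
    have "p * (1-u) \<ge> 0" "u * (1-p) \<ge> 0" using p u by auto
    moreover have "p * (1-u) > 0 \<or> u * (1-p) > 0" using p u by (cases "u = 1") auto
    ultimately show ?thesis by linarith
  qed
  have "r \<le> rho p u \<longleftrightarrow> r * (u * (1 - p) + p * (1 - u)) \<le> (1 - u) * (1 - p) + u * p"
    unfolding rho_def using den by (simp add: le_divide_eq)
  also have "\<dots> \<longleftrightarrow> r * (u * \<alpha> + (1 - u)) * p \<le> ((1 - u) * \<alpha> + u) * p"
  proof -
    have e1: "r * (u * \<alpha> + (1 - u)) * p = r * (u * (1 - p) + p * (1 - u))"
      using p by (simp add: \<alpha>_def field_simps)
    have e2: "((1 - u) * \<alpha> + u) * p = (1 - u) * (1 - p) + u * p"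
      using p by (simp add: \<alpha>_def field_simps)
    show ?thesis unfolding e1 e2 ..
  qed
  also have "\<dots> \<longleftrightarrow> r * (u * \<alpha> + (1 - u)) \<le> ((1 - u) * \<alpha> + u)"
    using p by simp
  also have "\<dots> \<longleftrightarrow> r - \<alpha> \<le> u * ((1+r) * (1-\<alpha>))"
    by (simp add: algebra_simps)
  also have "\<dots> \<longleftrightarrow> (r - \<alpha>) / ((1+r) * (1 - \<alpha>)) \<le> u"
    using a r by (simp add: divide_le_eq mult.commute)
  finally show ?thesis by (simp add: \<alpha>_def)
qed



lemma vk_eq:
  fixes p :: real and m :: nat
  assumes p: "1/2 < p" "p < 1" and m: "m \<ge> 1"
  defines "\<alpha> \<equiv> (1-p)/p"
  defines "r \<equiv> \<alpha> powr (1 / real m)"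
  shows "v_k p (m+1) = (r - \<alpha>) / ((1+r) * (1 - \<alpha>))"
proof -
  have a: "0 < \<alpha>" "\<alpha> < 1" using p by (auto simp: \<alpha>_def field_simps)
  have rpos: "r > 0" using a by (simp add: r_def)
  have e0: "(real (m+1) - 2) / (real (m+1) - 1) = 1 - 1 / real m" using m by (simp add: field_simps)
  have e0': "-1 / (real (m+1) - 1) = - (1 / real m)" by simp
  have e1: "\<alpha> powr (1 - 1 / real m) = \<alpha> / r" using a by (simp add: r_def powr_diff)
  have e2: "\<alpha> powr (- (1 / real m)) = 1 / r" using a by (simp add: r_def powr_minus_divide)
  have "v_k p (m+1) = (1 - \<alpha>/r) / (1 - \<alpha>/r + 1/r - \<alpha>)"
    unfolding v_k_def Let_def \<alpha>_def[symmetric] e0 e0' e1 e2 ..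
  also have "\<dots> = (r - \<alpha>) / (r - \<alpha> + 1 - \<alpha> * r)"
  proof -
    have "(1 - \<alpha>/r) = (r - \<alpha>) / r" "(1 - \<alpha>/r + 1/r - \<alpha>) = (r - \<alpha> + 1 - \<alpha> * r) / r"
      using rpos by (simp_all add: field_simps)
    then show ?thesis using rpos by simp
  qed
  also have "\<dots> = (r - \<alpha>) / ((1+r) * (1 - \<alpha>))" by (simp add: algebra_simps)
  finally show ?thesis .
qed

lemma r_bounds:
  fixes \<alpha> :: real and m :: nat
  assumes a: "0 < \<alpha>" "\<alpha> < 1" and m: "m \<ge> 2"
  shows "\<alpha> < \<alpha> powr (1 / real m)" "\<alpha> powr (1 / real m) < 1"
proof -
  have e: "\<alpha> powr (1 / real m) = exp (ln \<alpha> / real m)" using a by (simp add: powr_def)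
  have la: "ln \<alpha> < 0" using a by simp
  have "ln \<alpha> < ln \<alpha> / real m" using la m by (simp add: less_divide_eq)
  then have "exp (ln \<alpha>) < exp (ln \<alpha> / real m)" by simp
  then show "\<alpha> < \<alpha> powr (1 / real m)" using a e by simp
  have "ln \<alpha> / real m < 0" using la m by (simp add: divide_neg_pos)
  then show "\<alpha> powr (1 / real m) < 1" using e by simp
qed

lemma vf_bounds:
  fixes \<alpha> r :: real
  assumes "0 < \<alpha>" "\<alpha> < r" "r < 1"
  shows "0 < (r - \<alpha>) / ((1+r) * (1 - \<alpha>))" "(r - \<alpha>) / ((1+r) * (1 - \<alpha>)) < 1/2"
proof -
  have d: "(1+r) * (1 - \<alpha>) > 0" using assms by simp
  show "0 < (r - \<alpha>) / ((1+r) * (1 - \<alpha>))" using assms d by simp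
  have "2 * (r - \<alpha>) < (1+r) * (1 - \<alpha>)"
  proof -
    have "(1+r) * (1 - \<alpha>) - 2 * (r - \<alpha>) = (1 - r) * (1 + \<alpha>)" by (simp add: algebra_simps)
    moreover have "(1 - r) * (1 + \<alpha>) > 0" using assms by simp
    ultimately show ?thesis by linarith
  qed
  then show "(r - \<alpha>) / ((1+r) * (1 - \<alpha>)) < 1/2" using d by (simp add: divide_less_eq)
qed

lemma eps_u:
  fixes v eps :: real
  assumes "0 < v" "v < 1"
  shows "ln ((1-v)/v) < eps \<Longrightarrow> rr_flip eps < v"
    and "eps \<le> ln ((1-v)/v) \<Longrightarrow> v \<le> rr_flip eps"
proof -
  have pos: "(1-v)/v > 0" using assms by simp
  have key: "1 / (1 + (1-v)/v) = v" using assms by (simp add: field_simps)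
  show "rr_flip eps < v" if "ln ((1-v)/v) < eps"
  proof -
    have "(1-v)/v < exp eps" using that pos by (metis exp_less_cancel_iff exp_ln)
    then have "1 / (1 + exp eps) < 1 / (1 + (1-v)/v)" using pos
      by (intro divide_strict_left_mono) auto
    then show ?thesis using key by (simp add: rr_flip_def)
  qed
  show "v \<le> rr_flip eps" if "eps \<le> ln ((1-v)/v)"
  proof -
    have "exp eps \<le> (1-v)/v" using that pos by (metis exp_le_cancel_iff exp_ln)
    moreover have "0 < (1 + (1-v)/v) * (1 + exp eps)" using pos by (smt (verit) exp_gt_zero mult_pos_pos)
    ultimately have "1 / (1 + (1-v)/v) \<le> 1 / (1 + exp eps)" using pos
      by (intro divide_left_mono) auto
    then show ?thesis using key by (simp add: rr_flip_def)
  qed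
qed

lemma floor_thr:
  fixes \<alpha> \<rho> :: real and m :: nat
  assumes a: "0 < \<alpha>" "\<alpha> < 1" and rho: "0 < \<rho>" "\<rho> < 1" and m: "m \<ge> 1"
    and lo: "\<alpha> powr (1 / real m) \<le> \<rho>" and hi: "\<rho> < \<alpha> powr (1 / real (m+1))"
  shows "\<lfloor>log \<rho> \<alpha>\<rfloor> + 1 = int m + 1"
proof -
  have la: "ln \<alpha> < 0" and lr: "ln \<rho> < 0" using a rho by simp_all
  have "ln (\<alpha> powr (1 / real m)) \<le> ln \<rho>" using lo a rho ln_le_cancel_iff[of "\<alpha> powr (1 / real m)" \<rho>] by simp
  then have "ln \<alpha> / real m \<le> ln \<rho>" using a by (simp add: ln_powr)
  then have 1: "ln \<alpha> \<le> real m * ln \<rho>" using m by (simp add: divide_le_eq mult.commute)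
  have "ln \<rho> < ln (\<alpha> powr (1 / real (m+1)))" using hi a rho ln_less_cancel_iff[of \<rho> "\<alpha> powr (1 / real (m+1))"] by simp
  then have "ln \<rho> < ln \<alpha> / real (m+1)" using a by (simp add: ln_powr)
  then have 2: "real (m+1) * ln \<rho> < ln \<alpha>" by (simp add: less_divide_eq mult.commute)
  have "log \<rho> \<alpha> = ln \<alpha> / ln \<rho>" by (simp add: log_def)
  moreover have "real m \<le> ln \<alpha> / ln \<rho>" using 1 lr by (simp add: le_divide_eq)
  moreover have "ln \<alpha> / ln \<rho> < real m + 1" using 2 lr by (simp add: divide_less_eq algebra_simps)
  ultimately have "\<lfloor>log \<rho> \<alpha>\<rfloor> = int m" by (simp add: floor_eq_iff)
  then show ?thesis by simp
qed



lemma cp_formula: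
  fixes p u :: real and K :: nat
  assumes p: "1/2 < p" "p < 1" and u: "0 < u" "u < 1/2" and K: "K \<ge> 1"
  shows "correct_cascade_prob_k p u (int K) = 1 / (1 + rho p u ^ K)"
proof -
  define q where "q = p * (1-u) + (1-p) * u"
  note f = cp_formula_aux[OF p u, folded q_def]
  have l1: "lim (\<lambda>n. absorb q (int K) n 0 1) = 1 / (1 + rho p u ^ K)"
    using absorb_lim[of q K] f K by simp
  have "(\<lambda>n. absorb (1-q) (int K) n 0 (-1)) = (\<lambda>n. absorb q (int K) n 0 1)"
    using absorb_refl[of "int K" q] K by simp
  then have l2: "lim (\<lambda>n. absorb (1-q) (int K) n 0 (-1)) = 1 / (1 + rho p u ^ K)"
    using l1 by simp
  define R where "R = 1 / (1 + rho p u ^ K)"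
  show ?thesis unfolding correct_cascade_prob_k_def R_def[symmetric] using l1 l2 f(1,2)
    by (simp add: R_def[symmetric])
qed

lemma in_interval:
  fixes p eps :: real and k :: nat
  assumes p: "1/2 < p" "p < 1" and k: "k \<ge> 2" and e: "eps \<in> eps_interval p k"
  shows "0 < rr_flip eps" "rr_flip eps < 1/2" "cascade_threshold p (rr_flip eps) = int k"
proof -
  define u where "u = rr_flip eps"
  define \<alpha> where "\<alpha> = (1-p)/p"
  define m where "m = k - 1"
  have km: "k = m + 1" "m \<ge> 1" using k by (auto simp: m_def)
  have a: "0 < \<alpha>" "\<alpha> < 1" using p by (auto simp: \<alpha>_def field_simps)
  show u0: "0 < rr_flip eps" by (simp add: rr_flip_def add_pos_pos)
  define r2 where "r2 = \<alpha> powr (1 / real k)"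
  have r2: "\<alpha> < r2" "r2 < 1" using r_bounds[OF a k] by (auto simp: r2_def)
  define vf where "vf r = (r - \<alpha>) / ((1+r) * (1 - \<alpha>))" for r
  have v2: "v_k p (k+1) = vf r2" using vk_eq[OF p, of k] k by (simp add: vf_def r2_def \<alpha>_def)
  have v2b: "0 < vf r2" "vf r2 < 1/2" using vf_bounds[OF a(1) r2] by (auto simp: vf_def)
  have "eps_k p (k+1) < eps" using e by (simp add: eps_interval_def)
  then have uv2: "u < vf r2" using eps_u(1)[of "vf r2" eps] v2b v2 by (simp add: eps_k_def u_def)
  then show "rr_flip eps < 1/2" using v2b by (simp add: u_def)
  define r1 where "r1 = \<alpha> powr (1 / real m)"
  have r1pos: "r1 > 0" using a by (simp add: r1_def)
  have uv1: "vf r1 \<le> u"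
  proof (cases "k = 2")
    case True
    then have "m = 1" using km by simp
    then have "r1 = \<alpha>" using a by (simp add: r1_def)
    then show ?thesis using u0 by (simp add: vf_def u_def)
  next
    case False
    then have m2: "m \<ge> 2" using km k by simp
    have r1: "\<alpha> < r1" "r1 < 1" using r_bounds[OF a m2] by (auto simp: r1_def)
    have v1: "v_k p k = vf r1" using vk_eq[OF p km(2)] km by (simp add: vf_def r1_def \<alpha>_def)
    have v1b: "0 < vf r1" "vf r1 < 1/2" using vf_bounds[OF a(1) r1] by (auto simp: vf_def)
    have "eps \<le> eps_k p k" using e False by (simp add: eps_interval_def)
    then show ?thesis using eps_u(2)[of "vf r1" eps] v1b v1 by (simp add: eps_k_def u_def)
  qed
  have ub: "0 \<le> u" "u \<le> 1" using u0 uv2 v2b by (auto simp: u_def)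
  have lo: "r1 \<le> rho p u" using rho_ge_iff[OF p ub r1pos] uv1 by (simp add: vf_def \<alpha>_def)
  have hi: "rho p u < r2" using rho_ge_iff[OF p ub, of r2] uv2 r2 a by (simp add: vf_def \<alpha>_def)
  have u2: "0 < u" "u < 1/2" using u0 uv2 v2b by (auto simp: u_def)
  define q where "q = p * (1-u) + (1-p) * u"
  note f = cp_formula_aux[OF p u2, folded q_def]
  have "0 < (1-q)/q" "(1-q)/q < 1" using f(4,5) by (auto simp: field_simps)
  then have rb: "0 < rho p u" "rho p u < 1" using f(3) by auto
  have "\<lfloor>log (rho p u) \<alpha>\<rfloor> + 1 = int m + 1"
    by (rule floor_thr[OF a rb km(2)]) (use lo hi km in \<open>auto simp: r1_def r2_def\<close>)
  then show "cascade_threshold p (rr_flip eps) = int k"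
    by (simp add: cascade_threshold_def u_def \<alpha>_def km)
qed

theorem theorem2:
  fixes p :: real and k :: nat
  assumes "1/2 < p" and "p < 1" and "k \<ge> 2"
  shows "(\<forall>eps\<in>eps_interval p k. cascade_threshold p (rr_flip eps) = int k)
         \<and> strict_mono_on (eps_interval p k) (correct_cascade_prob p)"
proof
  note p = assms(1,2) and k = assms(3)
  show "\<forall>eps\<in>eps_interval p k. cascade_threshold p (rr_flip eps) = int k"
    using in_interval[OF p k] by blast
  have cp: "correct_cascade_prob p eps = 1 / (1 + rho p (rr_flip eps) ^ k)"
    if "eps \<in> eps_interval p k" for eps
    unfolding correct_cascade_prob_def in_interval(3)[OF p k that]
    by (rule cp_formula[OF p in_interval(1,2)[OF p k that]]) (use k in simp)
  show "strict_mono_on (eps_interval p k) (correct_cascade_prob p)"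
  proof (rule strict_mono_onI)
    fix e1 e2 assume e: "e1 \<in> eps_interval p k" "e2 \<in> eps_interval p k" "e1 < e2"
    define u1 where "u1 = rr_flip e1"
    define u2 where "u2 = rr_flip e2"
    have u12: "u2 < u1"
    proof -
      have "exp e1 < exp e2" using e by simp
      then show ?thesis by (simp add: u1_def u2_def rr_flip_def divide_strict_left_mono add_pos_pos)
    qed
    have ub1: "0 < u1" "u1 < 1/2" using in_interval(1,2)[OF p k e(1)] by (auto simp: u1_def)
    have ub2: "0 < u2" "u2 < 1/2" using in_interval(1,2)[OF p k e(2)] by (auto simp: u2_def)
    define q1 where "q1 = p * (1-u1) + (1-p) * u1"
    define q2 where "q2 = p * (1-u2) + (1-p) * u2"
    note f1 = cp_formula_aux[OF p ub1, folded q1_def]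
    note f2 = cp_formula_aux[OF p ub2, folded q2_def]
    have "q2 - q1 = (u1 - u2) * (2*p - 1)" by (simp add: q1_def q2_def algebra_simps)
    moreover have "(u1 - u2) * (2*p - 1) > 0" using u12 p by simp
    ultimately have q12: "q1 < q2" by simp
    have "(1-q2)/q2 < (1-q1)/q1"
    proof -
      have "(1-q2) * q1 < (1-q1) * q2" using q12 by (simp add: algebra_simps)
      then show ?thesis using f1 f2 by (simp add: divide_less_eq less_divide_eq field_simps)
    qed
    then have rl: "rho p u2 < rho p u1" using f1 f2 by simp
    have r0: "0 \<le> rho p u2" using f2 by simp
    have "rho p u2 ^ k < rho p u1 ^ k" using power_strict_mono[OF rl r0] k by simp
    moreover have "0 \<le> rho p u2 ^ k" using r0 by simp
    ultimately have "1 / (1 + rho p u1 ^ k) < 1 / (1 + rho p u2 ^ k)"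
      by (intro divide_strict_left_mono) (auto intro: mult_pos_pos)
    then show "correct_cascade_prob p e1 < correct_cascade_prob p e2"
      using cp[OF e(1)] cp[OF e(2)] by (simp add: u1_def u2_def)
  qed
qed


end
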